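(* Let $p$ be an odd prime. Then \[ \sum_{k=0}^{p-1}k\frac{(\frac{1}{p+1})_k^{p+1}}{k!^{p+1}}\equiv 0\pmod{p^3}. \]
   Context: $(a)_k=a(a+1)\cdots(a+k-1)$ is the Pochhammer symbol, with $(a)_0=1$. The congruence is between $p$-integral rational numbers: it means that the sum, a rational number whose denominator is coprime to $p$, has numerator divisible by $p^3$. *)

theory Defs
  imports Complex_Main "HOL-Computational_Algebra.Primes"
begin

definition rat_cong_zero :: "rat \<Rightarrow> int \<Rightarrow> bool" where
  "rat_cong_zero x m \<longleftrightarrow> (\<exists>a b. b \<noteq> 0 \<and> x = of_int a / of_int b \<and> coprime b m \<and> m dvd a)"

end

theory Submission
  imports Defs "HOL-Number_Theory.Cong"
begin

lemma expand2:
  fixes A X :: int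
  shows "\<exists>R. 2*(A+X)^(n+2) = 2*A^(n+2) + 2*int (n+2)*A^(n+1)*X + int (n+2)*int (n+1)*A^n*X^2 + X^3*R"
proof (induction n)
  case 0
  show ?case by (rule exI[of _ 0]) (simp add: power2_eq_square algebra_simps)
next
  case (Suc n)
  then obtain R where R: "2*(A+X)^(n+2) = 2*A^(n+2) + 2*int (n+2)*A^(n+1)*X + int (n+2)*int (n+1)*A^n*X^2 + X^3*R" by blast
  define a where "a = A^n"
  define N where "N = int n"
  have p: "A^(n+2) = A*A*a" "A^(n+1) = A*a" "A^(Suc n+2) = A*A*A*a" "A^(Suc n+1) = A*A*a" "A^(Suc n) = A*a"
    by (simp_all add: a_def)
  have q: "int (n+2) = N+2" "int (n+1) = N+1" "int (Suc n+2) = N+3" "int (Suc n+1) = N+2"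
    by (simp_all add: N_def)
  have R': "2*(A+X)^(n+2) = 2*(A*A*a) + 2*(N+2)*(A*a)*X + (N+2)*(N+1)*a*X^2 + X^3*R"
    using R unfolding p q a_def[symmetric] .
  have "2*(A+X)^(Suc n+2) = (A+X) * (2*(A+X)^(n+2))" by simp
  also have "\<dots> = 2*(A*A*A*a) + 2*(N+3)*(A*A*a)*X + (N+3)*(N+2)*(A*a)*X^2
       + X^3*(R*A + (N+2)*(N+1)*a + X*R)"
    unfolding R' by algebra
  finally show ?case unfolding p q by blast
qed


lemma key_int:
  fixes p :: nat and j :: int
  assumes "odd p"
  shows "(int p)^3 dvd (j*(int p+1) - int p)^(p+1) - (j - int p)*j^p*(int p+1)^(p+1)"
proof -
  define P where "P = int p"
  obtain m where pm: "p = m + 1" using assms by (cases p) auto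
  obtain R1 where R1: "2*(j+P*(j-1))^(m+2) = 2*j^(m+2) + 2*int (m+2)*j^(m+1)*(P*(j-1)) + int (m+2)*int (m+1)*j^m*(P*(j-1))^2 + (P*(j-1))^3*R1"
    using expand2 by blast
  obtain R2 where R2: "2*(1+P)^(m+2) = 2*1^(m+2) + 2*int (m+2)*1^(m+1)*P + int (m+2)*int (m+1)*1^m*P^2 + P^3*R2"
    using expand2 by blast
  define a where "a = j^m"
  have pw: "j^(m+2) = j*j*a" "j^(m+1) = j*a" "j^p = j*a" using pm by (simp_all add: a_def)
  have i1: "int (m+2) = P + 1" "int (m+1) = P" using pm by (auto simp: P_def)
  have R1': "2*(j+P*(j-1))^(p+1) = 2*(j*j*a) + 2*(P+1)*(j*a)*(P*(j-1)) + (P+1)*P*a*(P*(j-1))^2 + (P*(j-1))^3*R1"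
    using R1 unfolding i1 pw a_def[symmetric] by (simp add: pm)
  have R2': "2*(1+P)^(p+1) = 2 + 2*(P+1)*P + (P+1)*P*P^2 + P^3*R2"
    using R2 unfolding i1 by (simp add: pm)
  have L: "(j*(P+1) - P) = j+P*(j-1)" by algebra
  have "2*((j*(P+1) - P)^(p+1) - (j - P)*j^p*(P+1)^(p+1))
      = 2*(j+P*(j-1))^(p+1) - (j - P)*(j*a)*(2*(1+P)^(p+1))" unfolding L pw by (simp add: algebra_simps)
  also have "\<dots> = P^3 * ((P+1)*a*(j-1)^2 + (j-1)^3*R1 - (j-P)*(j*a)*(P+1+R2) + 2*(j*a))"
    unfolding R1' R2' by algebra
  finally have "P^3 dvd 2*((j*(P+1) - P)^(p+1) - (j - P)*j^p*(P+1)^(p+1))" by simp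
  moreover have "coprime (P^3) 2" using assms by (simp add: P_def)
  ultimately show ?thesis unfolding P_def using coprime_dvd_mult_right_iff by blast
qed


lemma rcz_add:
  assumes "rat_cong_zero x m" "rat_cong_zero y m"
  shows "rat_cong_zero (x + y) m"
proof -
  obtain a b where ab: "b \<noteq> 0" "x = of_int a / of_int b" "coprime b m" "m dvd a"
    using assms(1) unfolding rat_cong_zero_def by blast
  obtain c d where cd: "d \<noteq> 0" "y = of_int c / of_int d" "coprime d m" "m dvd c"
    using assms(2) unfolding rat_cong_zero_def by blast
  have "x + y = of_int (a*d + c*b) / of_int (b*d)"
    using ab cd by (simp add: field_simps)
  moreover have "b*d \<noteq> 0" using ab cd by simp
  moreover have "coprime (b*d) m" using ab cd by simp
  moreover have "m dvd a*d + c*b" using ab cd by simp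
  ultimately show ?thesis unfolding rat_cong_zero_def by blast
qed

lemma rcz_0: "rat_cong_zero 0 m"
  unfolding rat_cong_zero_def by (rule exI[of _ 0], rule exI[of _ 1]) simp

lemma rcz_sum:
  assumes "\<And>k. k \<in> A \<Longrightarrow> rat_cong_zero (f k) m"
  shows "rat_cong_zero (sum f A) m"
  using assms
  by (induction A rule: infinite_finite_induct) (auto simp: rcz_0 rcz_add)

lemma poch_prod:
  fixes p :: nat
  shows "pochhammer (1 / (of_nat (p+1)::rat)) k / fact k
       = (\<Prod>j=1..k. of_int (int j*(int p+1) - int p)) / (\<Prod>j=1..k. of_int ((int p+1)*int j))"
proof (induction k)
  case 0
  then show ?case by simp
next
  case (Suc k)
  have "pochhammer (1 / (of_nat (p+1)::rat)) (Suc k) / fact (Suc k)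
      = (pochhammer (1 / (of_nat (p+1)::rat)) k / fact k) * ((1 / of_nat (p+1) + of_nat k) / of_nat (Suc k))"
    by (simp add: pochhammer_Suc fact_Suc field_simps)
  also have "(1 / (of_nat (p+1)::rat) + of_nat k) / of_nat (Suc k)
     = of_int (int (Suc k)*(int p+1) - int p) / of_int ((int p+1)*int (Suc k))"
    by (simp add: field_simps)
  finally show ?case unfolding Suc by (simp add: atLeastAtMostSuc_conv field_simps)
qed

lemma w_prod:
  fixes p :: nat
  assumes "p \<ge> 1"
  shows "(\<Prod>j=1..k. (of_nat j - of_nat p) / of_nat j :: rat) = (-1)^k * of_nat ((p-1) choose k)"
proof (induction k)
  case 0
  then show ?case by simp
next
  case (Suc k)
  have bc: "of_nat (p - 1 - k) * (of_nat ((p-1) choose k) :: rat) = of_nat (Suc k) * of_nat ((p-1) choose Suc k)"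
    using binomial_absorb_comp[of "p-1" k] binomial_absorption[of k "p-1"] by (metis of_nat_mult)
  show ?case
  proof (cases "k \<le> p - 1")
    case True
    then have e: "of_nat (p - 1 - k) = (of_nat p - 1 - of_nat k :: rat)" using assms by (simp add: of_nat_diff)
    have "(\<Prod>j=1..Suc k. (of_nat j - of_nat p) / of_nat j :: rat)
       = (-1)^k * of_nat ((p-1) choose k) * ((of_nat (Suc k) - of_nat p) / of_nat (Suc k))"
      using Suc by (simp add: atLeastAtMostSuc_conv)
    also have "\<dots> = (-1)^Suc k * (of_nat (p - 1 - k) * of_nat ((p-1) choose k)) / of_nat (Suc k)"
      unfolding e by (simp add: field_simps)
    also have "\<dots> = (-1)^Suc k * of_nat ((p-1) choose Suc k)"
      unfolding bc by simp
    finally show ?thesis .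
  next
    case False
    then have z: "(p-1) choose k = 0" "(p-1) choose Suc k = 0" by auto
    have "(\<Prod>j=1..Suc k. (of_nat j - of_nat p) / of_nat j :: rat)
       = (\<Prod>j=1..k. (of_nat j - of_nat p) / of_nat j) * ((of_nat (Suc k) - of_nat p) / of_nat (Suc k))"
      by (simp add: atLeastAtMostSuc_conv)
    also have "\<dots> = 0" unfolding Suc z by simp
    finally show ?thesis unfolding z by simp
  qed
qed


theorem corollary1:
  fixes p :: nat
  assumes "prime p" and "odd p"
  shows "rat_cong_zero
           (\<Sum>k=0..p-1. of_nat k * (pochhammer (1 / of_nat (p+1)) k) ^ (p+1)
                                    / (fact k) ^ (p+1) :: rat)
           ((int p) ^ 3)"
proof -
  define P where "P = int p"
  define A where "A k = (\<Prod>j=1..k. (int j*(P+1) - P)^(p+1))" for k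
  define B where "B k = (\<Prod>j=1..k. (int j - P)*int j^p*(P+1)^(p+1))" for k
  define D where "D k = (\<Prod>j=1..k. ((P+1)*int j)^(p+1))" for k
  have p3: "p \<ge> 3" using assms prime_ge_2_nat[of p] by (cases "p = 2") auto
  have t1: "of_nat k * (pochhammer (1 / of_nat (p+1)) k) ^ (p+1) / (fact k) ^ (p+1)
        = (of_int (int k * A k) / of_int (D k) :: rat)" for k
  proof -
    have "of_nat k * (pochhammer (1 / of_nat (p+1)) k) ^ (p+1) / (fact k) ^ (p+1)
        = of_nat k * (pochhammer (1 / (of_nat (p+1)::rat)) k / fact k) ^ (p+1)"
      by (simp add: power_divide)
    also have "\<dots> = of_nat k * ((\<Prod>j=1..k. of_int (int j*(int p+1) - int p)) / (\<Prod>j=1..k. of_int ((int p+1)*int j))) ^ (p+1)"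
      unfolding poch_prod ..
    also have "\<dots> = of_int (int k * A k) / of_int (D k)"
      unfolding A_def D_def P_def by (simp only: power_divide prod_power_distrib of_int_mult of_int_prod of_int_power of_int_of_nat_eq of_int_add of_int_diff of_int_1 times_divide_eq_right)
    finally show ?thesis .
  qed
  have t2: "of_nat k * ((-1)^k * of_nat ((p-1) choose k)) = (of_int (int k * B k) / of_int (D k) :: rat)" for k
  proof -
    have "(of_int (B k) / of_int (D k) :: rat) = (\<Prod>j=1..k. of_int ((int j - P)*int j^p*(P+1)^(p+1)) / of_int (((P+1)*int j)^(p+1)))"
      unfolding B_def D_def of_int_prod by (rule prod_dividef[symmetric])
    also have "\<dots> = (\<Prod>j=1..k. (of_nat j - of_nat p) / of_nat j)"
    proof (rule prod.cong[OF refl])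
      fix j assume "j \<in> {1..k}"
      then have j0: "(of_nat j :: rat) \<noteq> 0" by simp
      have pp: "(of_nat p + 1 :: rat) \<noteq> 0" by (metis of_nat_Suc of_nat_eq_0_iff add.commute Suc_neq_Zero)
      show "of_int ((int j - P)*int j^p*(P+1)^(p+1)) / of_int (((P+1)*int j)^(p+1)) = (of_nat j - of_nat p :: rat) / of_nat j"
      proof -
        define c where "c = (of_nat j ^ p * (of_nat p + 1) ^ (p+1) :: rat)"
        have c0: "c \<noteq> 0" unfolding c_def using j0 pp by simp
        have n: "of_int ((int j - P)*int j^p*(P+1)^(p+1)) = (of_nat j - of_nat p) * c"
          unfolding c_def P_def by simp
        have d: "(of_int (((P+1)*int j)^(p+1)) :: rat) = of_nat j * c"
          unfolding c_def P_def of_int_power power_mult_distrib by (simp add: mult_ac)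
        show ?thesis unfolding n d using c0 j0 by simp
      qed
    qed
    also have "\<dots> = (-1)^k * of_nat ((p-1) choose k)" using w_prod p3 by simp
    finally have h: "(of_int (B k) / of_int (D k) :: rat) = (-1)^k * of_nat ((p-1) choose k)" .
    show ?thesis by (simp only: of_int_mult of_int_of_nat_eq times_divide_eq_right[symmetric] h)
  qed
  have z: "(\<Sum>k=0..p-1. of_nat k * ((-1)^k * of_nat ((p-1) choose k)) :: rat) = 0"
  proof -
    have "(\<Sum>k=0..p-1. of_nat k * ((-1)^k * of_nat ((p-1) choose k)) :: rat)
        = (\<Sum>i\<le>p-1. (-1)^i * of_nat i * of_nat ((p-1) choose i))"
      unfolding atLeast0AtMost by (rule sum.cong) (simp_all only: mult_ac)
    also have "\<dots> = 0" using choose_alternating_linear_sum[of "p-1", where 'a=rat] p3 by simp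
    finally show ?thesis .
  qed
  have "(\<Sum>k=0..p-1. of_nat k * (pochhammer (1 / of_nat (p+1)) k) ^ (p+1) / (fact k) ^ (p+1) :: rat)
     = (\<Sum>k=0..p-1. of_int (int k * A k) / of_int (D k) - of_int (int k * B k) / of_int (D k))"
  proof -
    have zz: "(\<Sum>k=0..p-1. of_int (int k * B k) / of_int (D k) :: rat) = 0"
      using z by (simp only: t2)
    show ?thesis by (simp only: t1 sum_subtractf zz diff_zero)
  qed
  also have "\<dots> = (\<Sum>k=0..p-1. of_int (int k * (A k - B k)) / of_int (D k))"
  proof -
    have e: "of_int (int k * A k) / of_int (D k) - of_int (int k * B k) / of_int (D k) = (of_int (int k * (A k - B k)) / of_int (D k) :: rat)" for k
      by (simp only: diff_divide_distrib[symmetric] of_int_diff[symmetric] right_diff_distrib)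
    show ?thesis apply (rule sum.cong[OF refl]) apply (rule e) done
  qed
  finally have S: "(\<Sum>k=0..p-1. of_nat k * (pochhammer (1 / of_nat (p+1)) k) ^ (p+1) / (fact k) ^ (p+1) :: rat)
     = (\<Sum>k=0..p-1. of_int (int k * (A k - B k)) / of_int (D k))" .
  have primeP: "prime P" using assms unfolding P_def by simp
  show ?thesis unfolding S P_def[symmetric]
  proof (rule rcz_sum)
    fix k assume k: "k \<in> {0..p-1}"
    have dv: "P^3 dvd A k - B k"
    proof -
      have "[A k = B k] (mod P^3)" unfolding A_def B_def
      proof (rule cong_prod)
        fix j assume "j \<in> {1..k}"
        show "[(int j*(P+1) - P)^(p+1) = (int j - P)*int j^p*(P+1)^(p+1)] (mod P^3)"
          unfolding cong_iff_dvd_diff P_def by (rule key_int[OF assms(2)])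
      qed
      then show ?thesis by (simp add: cong_iff_dvd_diff)
    qed
    have cj: "coprime ((P+1)*int j) P" if "j \<in> {1..k}" for j
    proof -
      have "0 < int j" "int j < P" using that k p3 unfolding P_def by auto
      then have "\<not> P dvd int j" using zdvd_not_zless by blast
      then have "coprime P (int j)" using primeP prime_imp_coprime by blast
      moreover have "coprime (P+1) P" by simp
      ultimately show ?thesis by (simp add: coprime_commute)
    qed
    have cD: "coprime (D k) (P^3)" unfolding D_def
      by (rule prod_coprime_left) (use cj in simp)
    have D0: "D k \<noteq> 0" unfolding D_def P_def by simp
    show "rat_cong_zero (of_int (int k * (A k - B k)) / of_int (D k)) (P^3)"
    proof -
      have "P^3 dvd int k * (A k - B k)" using dv by (rule dvd_mult)
      then show ?thesis unfolding rat_cong_zero_def using cD D0 by blast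
    qed
  qed
qed

end
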